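(* Let $F$ be a field and let $G$ be a bipartite graph with bipartition $(X,Y)$, where $|X|=m$, $|Y|=n$ and $m\le n$. If $\mathcal{R}_F(G)\neq\emptyset$, then $$f(G\Box K_2)=m.$$
   Context: All graphs are finite and simple. For a graph $H$ with a perfect matching $M$, a subset $S\subseteq M$ is a forcing set of $M$ if $S$ is contained in no other perfect matching of $H$; $f(H,M)$ is the minimum size of a forcing set of $M$, and $f(H)$ is the minimum of $f(H,M)$ over all perfect matchings $M$ of $H$. For a bipartite graph $G$ with bipartition $(X,Y)$, a weighted bi-adjacency matrix of $G$ over $F$ is an $|X|\times|Y|$ matrix over $F$, rows indexed by $X$ and columns by $Y$, whose $(x,y)$ entry is nonzero iff $x$ and $y$ are adjacent. $\mathcal{R}_F(G)$ denotes the set of weighted bi-adjacency matrices $B$ of $G$ over $F$ (rows indexed by $X$, columns by $Y$) for which there is another weighted bi-adjacency matrix $C$ of $G$ over $F$ (rows indexed by $X$, columns by $Y$) with $BC^{\top}=I_m$; so $\mathcal{R}_F(G)\neq\emptyset$ means such a pair $B,C$ exists. $K_2$ is the complete graph on two vertices, and $G\Box H$ is the Cartesian product: vertex set $V(G)\times V(H)$, with $(g_1,h_1)\sim(g_2,h_2)$ iff either $g_1=g_2$ and $h_1h_2\in E(H)$, or $h_1=h_2$ and $g_1g_2\in E(G)$. *)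

theory Defs
  imports Main
begin

definition simple_graph :: "'a set \<Rightarrow> 'a set set \<Rightarrow> bool" where
  "simple_graph V E \<longleftrightarrow> finite V \<and>
     (\<forall>e\<in>E. \<exists>u v. e = {u, v} \<and> u \<noteq> v \<and> u \<in> V \<and> v \<in> V)"

definition perfect_matching :: "'a set \<Rightarrow> 'a set set \<Rightarrow> 'a set set \<Rightarrow> bool" where
  "perfect_matching V E M \<longleftrightarrow> M \<subseteq> E \<and> (\<forall>v\<in>V. \<exists>!e. e \<in> M \<and> v \<in> e)"

definition forcing_set :: "'a set \<Rightarrow> 'a set set \<Rightarrow> 'a set set \<Rightarrow> 'a set set \<Rightarrow> bool" where
  "forcing_set V E M S \<longleftrightarrow> S \<subseteq> M \<and>
     (\<forall>M'. perfect_matching V E M' \<and> S \<subseteq> M' \<longrightarrow> M' = M)"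

definition forcing_number :: "'a set \<Rightarrow> 'a set set \<Rightarrow> 'a set set \<Rightarrow> nat" where
  "forcing_number V E M = (LEAST k. \<exists>S. forcing_set V E M S \<and> card S = k)"

definition min_forcing_number :: "'a set \<Rightarrow> 'a set set \<Rightarrow> nat" where
  "min_forcing_number V E = Min {forcing_number V E M | M. perfect_matching V E M}"

definition cart_prod_V :: "'a set \<Rightarrow> 'b set \<Rightarrow> ('a \<times> 'b) set" where
  "cart_prod_V V1 V2 = V1 \<times> V2"

definition cart_prod_E :: "'a set \<Rightarrow> 'a set set \<Rightarrow> 'b set \<Rightarrow> 'b set set \<Rightarrow> ('a \<times> 'b) set set" where
  "cart_prod_E V1 E1 V2 E2 =
     {{(g1, h1), (g2, h2)} | g1 h1 g2 h2.
        g1 \<in> V1 \<and> g2 \<in> V1 \<and> h1 \<in> V2 \<and> h2 \<in> V2 \<and>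
        ((g1 = g2 \<and> {h1, h2} \<in> E2) \<or> (h1 = h2 \<and> {g1, g2} \<in> E1))}"

definition K2_V :: "nat set" where "K2_V = {0, 1}"
definition K2_E :: "nat set set" where "K2_E = {{0, 1}}"

definition bipartition :: "'a set \<Rightarrow> 'a set set \<Rightarrow> 'a set \<Rightarrow> 'a set \<Rightarrow> bool" where
  "bipartition V E X Y \<longleftrightarrow> X \<inter> Y = {} \<and> X \<union> Y = V \<and>
     (\<forall>e\<in>E. \<exists>x y. x \<in> X \<and> y \<in> Y \<and> e = {x, y})"

text \<open>Weighted bi-adjacency matrix of G over a field: an X-by-Y matrix, represented as
  a function on X \<times> Y (values outside X \<times> Y are irrelevant), with nonzero entries exactly
  at the edges.\<close>
definition weighted_biadj :: "'a set set \<Rightarrow> 'a set \<Rightarrow> 'a set \<Rightarrow> ('a \<Rightarrow> 'a \<Rightarrow> 'f::field) \<Rightarrow> bool" where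
  "weighted_biadj E X Y B \<longleftrightarrow> (\<forall>x\<in>X. \<forall>y\<in>Y. B x y \<noteq> 0 \<longleftrightarrow> {x, y} \<in> E)"

definition R_F :: "'a set set \<Rightarrow> 'a set \<Rightarrow> 'a set \<Rightarrow> ('a \<Rightarrow> 'a \<Rightarrow> 'f::field) set" where
  "R_F E X Y = {B. weighted_biadj E X Y B \<and>
     (\<exists>C. weighted_biadj E X Y C \<and>
        (\<forall>x\<in>X. \<forall>x'\<in>X. (\<Sum>y\<in>Y. B x y * C x' y) = (if x = x' then 1 else 0)))}"

end

theory Submission
  imports Defs
begin



lemma homog_nontrivial:
  fixes l :: "'i \<Rightarrow> 'x \<Rightarrow> 'f::field"
  assumes "finite I" "finite X" "card I < card X"
  shows "\<exists>w. (\<exists>x\<in>X. w x \<noteq> 0) \<and> (\<forall>i\<in>I. (\<Sum>x\<in>X. l i x * w x) = 0)"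
  using assms
proof (induction I arbitrary: X l rule: finite_induct)
  case empty
  then have "X \<noteq> {}" by auto
  then show ?case by (intro exI[of _ "\<lambda>_. 1"]) auto
next
  case (insert i I)
  show ?case
  proof (cases "\<forall>x\<in>X. l i x = 0")
    case True
    have "card I < card X" using insert by simp
    then obtain w where w: "(\<exists>x\<in>X. w x \<noteq> 0)" "\<forall>j\<in>I. (\<Sum>x\<in>X. l j x * w x) = 0"
      using insert.IH[OF insert.prems(1)] by blast
    show ?thesis using w True by (intro exI[of _ w]) auto
  next
    case False
    then obtain x0 where x0: "x0 \<in> X" "l i x0 \<noteq> 0" by auto
    define X' where "X' = X - {x0}"
    define l' where "l' = (\<lambda>j x. l j x - l j x0 / l i x0 * l i x)"
    have fX': "finite X'" using insert.prems X'_def by simp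
    have cX': "card I < card X'" using insert x0 X'_def by simp
    obtain w' where w': "\<exists>x\<in>X'. w' x \<noteq> 0" "\<forall>j\<in>I. (\<Sum>x\<in>X'. l' j x * w' x) = 0"
      using insert.IH[OF fX' cX'] by blast
    define T where "T = (\<Sum>x\<in>X'. l i x * w' x)"
    define w where "w = w'(x0 := - T / l i x0)"
    have split: "(\<Sum>x\<in>X. l j x * w x) = l j x0 * (- T / l i x0) + (\<Sum>x\<in>X'. l j x * w' x)" for j
    proof -
      have "(\<Sum>x\<in>X. l j x * w x) = l j x0 * w x0 + (\<Sum>x\<in>X'. l j x * w x)"
        using sum.remove[OF insert.prems(1) x0(1)] X'_def by simp
      also have "(\<Sum>x\<in>X'. l j x * w x) = (\<Sum>x\<in>X'. l j x * w' x)"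
        by (rule sum.cong) (auto simp: w_def X'_def)
      finally show ?thesis by (simp add: w_def)
    qed
    have "(\<Sum>x\<in>X. l j x * w x) = 0" if "j \<in> insert i I" for j
    proof (cases "j = i")
      case True
      then show ?thesis using split[of i] x0 T_def by simp
    next
      case False
      then have "j \<in> I" using that by simp
      then have "(\<Sum>x\<in>X'. l' j x * w' x) = 0" using w' by simp
      then have "(\<Sum>x\<in>X'. l j x * w' x) - l j x0 / l i x0 * T = 0"
        unfolding l'_def T_def by (simp add: algebra_simps sum_subtractf sum_distrib_left)
      then show ?thesis using split[of j] x0 by (simp add: field_simps)
    qed
    moreover have "\<exists>x\<in>X. w x \<noteq> 0" using w' by (auto simp: w_def X'_def)
    ultimately show ?thesis by blast
  qed
qed




lemma min_invariant:
  fixes g :: "'v \<Rightarrow> 'v"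
  assumes "finite Z" "Z \<noteq> {}" "g ` Z \<subseteq> Z"
  shows "\<exists>Q. Q \<subseteq> Z \<and> Q \<noteq> {} \<and> g ` Q = Q"
proof -
  let ?P = "\<lambda>Q. Q \<subseteq> Z \<and> Q \<noteq> {} \<and> g ` Q \<subseteq> Q"
  define n where "n = (LEAST n. \<exists>Q. ?P Q \<and> card Q = n)"
  have "\<exists>Q. ?P Q \<and> card Q = n" unfolding n_def
    by (rule LeastI_ex) (use assms in blast)
  then obtain Q where Q: "?P Q" "card Q = n" by blast
  have fQ: "finite Q" using Q assms finite_subset by blast
  have "?P (g ` Q)" using Q by auto
  then have "n \<le> card (g ` Q)" unfolding n_def by (intro Least_le) blast
  then have "card Q \<le> card (g ` Q)" using Q by simp
  then have "g ` Q = Q" using Q fQ by (meson card_seteq)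
  then show ?thesis using Q by blast
qed

lemma alt_cycle:
  fixes W :: "'v set" and ptn g :: "'v \<Rightarrow> 'v"
  assumes pm: "perfect_matching W E' M"
    and forc: "forcing_set W E' M S"
    and Zsub: "Z \<subseteq> W" "finite Z" "Z \<noteq> {}"
    and ptn: "\<forall>c\<in>Z. {c, ptn c} \<in> M \<and> ptn c \<notin> Z \<and> ptn c \<in> W"
    and SZ: "\<forall>c\<in>Z. \<forall>e\<in>S. c \<notin> e"
    and g: "\<forall>c\<in>Z. g c \<in> Z \<and> g c \<noteq> c \<and> {ptn c, g c} \<in> E'"
  shows False
proof -
  obtain Q where Q: "Q \<subseteq> Z" "Q \<noteq> {}" "g ` Q = Q"
    using min_invariant[OF Zsub(2,3), of g] g by blast
  have fQ: "finite Q" using Q Zsub finite_subset by blast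
  have ginj: "inj_on g Q" using Q fQ by (simp add: eq_card_imp_inj_on)
  have Msub: "M \<subseteq> E'" and uniq: "\<And>v. v \<in> W \<Longrightarrow> \<exists>!e. e \<in> M \<and> v \<in> e"
    using pm unfolding perfect_matching_def by auto
  have pinj: "inj_on ptn Q"
  proof (rule inj_onI)
    fix c c' assume c: "c \<in> Q" "c' \<in> Q" "ptn c = ptn c'"
    have "{c, ptn c} = {c', ptn c'}"
      using uniq[of "ptn c"] ptn c Q by (metis insertCI subsetD)
    then show "c = c'" using ptn c Q by (metis doubleton_eq_iff subsetD)
  qed
  have QZ: "\<And>c. c \<in> Q \<Longrightarrow> c \<in> Z" using Q by blast
  have pZ: "\<And>c. c \<in> Q \<Longrightarrow> ptn c \<notin> Z" using ptn QZ by blast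
  have gZ: "\<And>c. c \<in> Q \<Longrightarrow> g c \<in> Z" using g QZ by blast
  have cM: "\<And>c. c \<in> Q \<Longrightarrow> {c, ptn c} \<in> M" using ptn QZ by blast
  define M' where "M' = (M - {{ptn c, c} | c. c \<in> Q}) \<union> {{ptn c, g c} | c. c \<in> Q}"
  have SM: "S \<subseteq> M" and forc2: "\<And>M''. perfect_matching W E' M'' \<Longrightarrow> S \<subseteq> M'' \<Longrightarrow> M'' = M"
    using forc unfolding forcing_set_def by auto
  have "S \<subseteq> M'"
  proof
    fix e assume e: "e \<in> S"
    have "e \<notin> {{ptn c, c} | c. c \<in> Q}" using SZ e Q by blast
    then show "e \<in> M'" using SM e unfolding M'_def by blast
  qed
  moreover have "perfect_matching W E' M'"
    unfolding perfect_matching_def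
  proof (intro conjI ballI)
    show "M' \<subseteq> E'" unfolding M'_def using Msub g Q by blast
  next
    fix v assume v: "v \<in> W"
    show "\<exists>!e. e \<in> M' \<and> v \<in> e"
    proof (cases "v \<in> ptn ` Q")
      case True
      then obtain c where c: "c \<in> Q" "v = ptn c" by blast
      show ?thesis
      proof (rule ex1I[of _ "{ptn c, g c}"])
        show "{ptn c, g c} \<in> M' \<and> v \<in> {ptn c, g c}" using c unfolding M'_def by blast
      next
        fix e assume e: "e \<in> M' \<and> v \<in> e"
        show "e = {ptn c, g c}"
        proof (cases "e \<in> M - {{ptn c, c} | c. c \<in> Q}")
          case True
          have "{c, ptn c} \<in> M" using cM c by blast
          moreover have "v \<in> {c, ptn c}" using c by blast
          ultimately have "e = {c, ptn c}" using uniq[OF v] e True by blast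
          then show ?thesis using True c by auto
        next
          case False
          then obtain c' where c': "c' \<in> Q" "e = {ptn c', g c'}" using e unfolding M'_def by blast
          have "v \<noteq> g c'" using c c' pZ gZ by metis
          then have "v = ptn c'" using e c' by blast
          then have "c = c'" using pinj c c' by (metis inj_onD)
          then show ?thesis using c' by simp
        qed
      qed
    next
      case notp: False
      show ?thesis
      proof (cases "v \<in> Q")
        case True
        then obtain c where c: "c \<in> Q" "v = g c" using Q(3) by (metis imageE)
        show ?thesis
        proof (rule ex1I[of _ "{ptn c, g c}"])
          show "{ptn c, g c} \<in> M' \<and> v \<in> {ptn c, g c}" using c unfolding M'_def by blast
        next
          fix e assume e: "e \<in> M' \<and> v \<in> e"
          show "e = {ptn c, g c}"
          proof (cases "e \<in> M - {{ptn c, c} | c. c \<in> Q}")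
            case True
            have "{v, ptn v} \<in> M" using cM \<open>v \<in> Q\<close> by blast
            moreover have "v \<in> {v, ptn v}" by blast
            ultimately have "e = {v, ptn v}" using uniq[OF v] e True by blast
            then show ?thesis using True \<open>v \<in> Q\<close> by auto
          next
            case False
            then obtain c' where c': "c' \<in> Q" "e = {ptn c', g c'}" using e unfolding M'_def by blast
            have "v \<noteq> ptn c'" using notp c' by blast
            then have "v = g c'" using e c' by blast
            then have "c = c'" using ginj c c' by (metis inj_onD)
            then show ?thesis using c' by simp
          qed
        qed
      next
        case False
        obtain e0 where e0: "e0 \<in> M" "v \<in> e0" using uniq[OF v] by blast
        have e0n: "e0 \<notin> {{ptn c, c} | c. c \<in> Q}" using notp False e0 by blast
        show ?thesis
        proof (rule ex1I[of _ e0])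
          show "e0 \<in> M' \<and> v \<in> e0" using e0 e0n unfolding M'_def by blast
        next
          fix e assume e: "e \<in> M' \<and> v \<in> e"
          have "e \<notin> {{ptn c, g c} | c. c \<in> Q}" using notp False e Q by blast
          then have "e \<in> M" using e unfolding M'_def by blast
          then show "e = e0" using uniq[OF v] e e0 by blast
        qed
      qed
    qed
  qed
  ultimately have "M' = M" using forc2 by blast
  obtain c where c: "c \<in> Q" using Q by blast
  have "{ptn c, g c} \<in> M" using \<open>M' = M\<close> c unfolding M'_def by blast
  moreover have "{c, ptn c} \<in> M" using ptn c Q by blast
  moreover have "ptn c \<in> W" using ptn c Q by blast
  ultimately have "{ptn c, g c} = {c, ptn c}"
  proof -
    assume a: "{ptn c, g c} \<in> M" "{c, ptn c} \<in> M" "ptn c \<in> W"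
    obtain e where e: "\<And>e'. e' \<in> M \<and> ptn c \<in> e' \<Longrightarrow> e' = e"
      using uniq[OF a(3)] by blast
    have "{ptn c, g c} = e" using a(1) by (intro e) simp
    moreover have "{c, ptn c} = e" using a(2) by (intro e) simp
    ultimately show ?thesis by simp
  qed
  moreover have "g c \<noteq> ptn c" using pZ[OF c] gZ[OF c] by metis
  ultimately have "g c = c" by (metis doubleton_eq_iff)
  then show False using g QZ[OF c] by blast
qed




lemma memE':
  "{(a,i),(b,j)} \<in> cart_prod_E V E K2_V K2_E \<longleftrightarrow>
   a \<in> V \<and> b \<in> V \<and> i \<in> {0,1} \<and> j \<in> {0,1} \<and> ((a = b \<and> i \<noteq> j) \<or> (i = j \<and> {a,b} \<in> E))"
proof
  assume "{(a,i),(b,j)} \<in> cart_prod_E V E K2_V K2_E"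
  then obtain g1 h1 g2 h2 where e: "{(a,i),(b,j)} = {(g1,h1),(g2,h2)}"
    and c: "g1 \<in> V" "g2 \<in> V" "h1 \<in> {0,1}" "h2 \<in> {0,1}"
    "(g1 = g2 \<and> {h1, h2} = {0,1}) \<or> (h1 = h2 \<and> {g1, g2} \<in> E)"
    unfolding cart_prod_E_def K2_V_def K2_E_def by auto
  from e have "((a,i) = (g1,h1) \<and> (b,j) = (g2,h2)) \<or> ((a,i) = (g2,h2) \<and> (b,j) = (g1,h1))"
    by (simp add: doubleton_eq_iff)
  then show "a \<in> V \<and> b \<in> V \<and> i \<in> {0,1} \<and> j \<in> {0,1} \<and> ((a = b \<and> i \<noteq> j) \<or> (i = j \<and> {a,b} \<in> E))"
    using c by (auto simp: doubleton_eq_iff insert_commute)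
next
  assume a: "a \<in> V \<and> b \<in> V \<and> i \<in> {0,1} \<and> j \<in> {0,1} \<and> ((a = b \<and> i \<noteq> j) \<or> (i = j \<and> {a,b} \<in> E))"
  have ij: "i = 0 \<or> i = 1" "j = 0 \<or> j = 1" using a by auto
  have "{i,j} = {0::nat,1}" if "i \<noteq> j" using ij that by (elim disjE) (simp_all add: insert_commute)
  then have k: "(a = b \<and> {i, j} \<in> K2_E) \<or> (i = j \<and> {a, b} \<in> E)"
    using a unfolding K2_E_def by auto
  have "\<exists>g1 h1 g2 h2. {(a,i),(b,j)} = {(g1,h1),(g2,h2)} \<and> g1 \<in> V \<and> g2 \<in> V \<and> h1 \<in> K2_V \<and> h2 \<in> K2_V \<and>
        ((g1 = g2 \<and> {h1, h2} \<in> K2_E) \<or> (h1 = h2 \<and> {g1, g2} \<in> E))"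
    apply (rule exI[of _ a], rule exI[of _ i], rule exI[of _ b], rule exI[of _ j])
    using a k unfolding K2_V_def by simp
  then show "{(a,i),(b,j)} \<in> cart_prod_E V E K2_V K2_E"
    unfolding cart_prod_E_def by (simp only: mem_Collect_eq)
qed

lemma E'_form:
  assumes "e \<in> cart_prod_E V E K2_V K2_E"
  shows "\<exists>a i b j. e = {(a,i),(b,j)} \<and> {(a,i),(b,j)} \<in> cart_prod_E V E K2_V K2_E"
  using assms unfolding cart_prod_E_def by blast





lemma sum_P2:
  fixes f :: "'a \<times> nat \<Rightarrow> 'f::comm_monoid_add"
  assumes "finite X" "finite Y"
  shows "(\<Sum>q\<in>Y \<times> {0::nat} \<union> X \<times> {1}. f q) = (\<Sum>y\<in>Y. f (y,0)) + (\<Sum>x\<in>X. f (x,1))"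
proof -
  have "(\<Sum>q\<in>Y \<times> {0::nat} \<union> X \<times> {1}. f q) = (\<Sum>q\<in>Y \<times> {0::nat}. f q) + (\<Sum>q\<in>X \<times> {1}. f q)"
    using assms by (intro sum.union_disjoint) auto
  moreover have "(\<Sum>q\<in>Y \<times> {0::nat}. f q) = (\<Sum>y\<in>Y. f (y,0))"
  proof -
    have "Y \<times> {0::nat} = (\<lambda>y. (y,0)) ` Y" by auto
    then show ?thesis by (simp add: sum.reindex inj_on_def)
  qed
  moreover have "(\<Sum>q\<in>X \<times> {1::nat}. f q) = (\<Sum>x\<in>X. f (x,1))"
  proof -
    have "X \<times> {1::nat} = (\<lambda>y. (y,1)) ` X" by auto
    then show ?thesis by (simp add: sum.reindex inj_on_def)
  qed
  ultimately show ?thesis by simp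
qed


lemma lower_bound:
  fixes V :: "'a set" and E X Y and B C :: "'a \<Rightarrow> 'a \<Rightarrow> 'f::field"
  assumes sg: "simple_graph V E" and bp: "bipartition V E X Y"
    and wB: "weighted_biadj E X Y B" and wC: "weighted_biadj E X Y C"
    and BC: "\<forall>x\<in>X. \<forall>x'\<in>X. (\<Sum>y\<in>Y. B x y * C x' y) = (if x = x' then 1 else 0)"
    and pm: "perfect_matching (cart_prod_V V K2_V) (cart_prod_E V E K2_V K2_E) M"
    and fs: "forcing_set (cart_prod_V V K2_V) (cart_prod_E V E K2_V K2_E) M S"
  shows "card X \<le> card S"
proof (rule ccontr)
  assume lt: "\<not> card X \<le> card S"
  define W where "W = cart_prod_V V K2_V"
  define E' where "E' = cart_prod_E V E K2_V K2_E"
  have W: "W = V \<times> {0,1}" by (simp add: W_def cart_prod_V_def K2_V_def)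
  have XY: "X \<inter> Y = {}" "X \<union> Y = V" and bE: "\<forall>e\<in>E. \<exists>x y. x\<in>X \<and> y\<in>Y \<and> e={x,y}"
    using bp unfolding bipartition_def by auto
  have finV: "finite V" using sg unfolding simple_graph_def by auto
  have finX: "finite X" and finY: "finite Y" using finV XY by (auto intro: finite_subset)
  have finW: "finite W" using finV W by simp
  define P1 where "P1 = X \<times> {0::nat} \<union> Y \<times> {1}"
  define P2 where "P2 = Y \<times> {0::nat} \<union> X \<times> {1}"
  have P12: "P1 \<inter> P2 = {}" using XY by (auto simp: P1_def P2_def)
  have P1W: "P1 \<subseteq> W" and P2W: "P2 \<subseteq> W" using XY by (auto simp: P1_def P2_def W)
  have edge: "\<exists>p q. e = {p,q} \<and> p \<in> P1 \<and> q \<in> P2" if eE: "e \<in> E'" for e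
  proof -
    obtain a i b j where e: "e = {(a,i),(b,j)}" and m: "{(a,i),(b,j)} \<in> E'"
      using E'_form[OF eE[unfolded E'_def]] E'_def by blast
    have c: "a \<in> V" "b \<in> V" "i \<in> {0,1}" "j \<in> {0,1}" "(a = b \<and> i \<noteq> j) \<or> (i = j \<and> {a,b} \<in> E)"
      using m unfolding E'_def memE' by auto
    have "((a,i) \<in> P1 \<and> (b,j) \<in> P2) \<or> ((b,j) \<in> P1 \<and> (a,i) \<in> P2)"
    proof (cases "a = b \<and> i \<noteq> j")
      case True
      then show ?thesis using c XY by (auto simp: P1_def P2_def)
    next
      case False
      then have "i = j" "{a,b} \<in> E" using c by auto
      then obtain x y where xy: "x \<in> X" "y \<in> Y" "{a,b} = {x,y}" using bE by blast
      then have "(a = x \<and> b = y) \<or> (a = y \<and> b = x)" by (auto simp: doubleton_eq_iff)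
      then show ?thesis using xy \<open>i = j\<close> c by (auto simp: P1_def P2_def)
    qed
    then show ?thesis using e by (metis insert_commute)
  qed
  define A where "A = (\<lambda>(a::'a,i::nat) (b::'a,j::nat). if i = 0 then (if j = 0 then B a b else if a = b then 1 else 0)
       else (if j = 0 then (if a = b then 1 else 0) else C b a))"
  have Achar: "A p q \<noteq> 0 \<longleftrightarrow> {p,q} \<in> E'" if "p \<in> P1" "q \<in> P2" for p q
  proof -
    obtain a i b j where pq: "p = (a,i)" "q = (b,j)" by fastforce
    have wC': "\<forall>x\<in>X. \<forall>y\<in>Y. (C x y \<noteq> 0) = ({y, x} \<in> E)"
      using wC unfolding weighted_biadj_def by (simp add: insert_commute)
    show ?thesis using that XY wB wC' unfolding pq E'_def memE'
      by (auto simp: P1_def P2_def A_def weighted_biadj_def)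
  qed
  have Msub: "M \<subseteq> E'" and uniq: "\<And>v. v \<in> W \<Longrightarrow> \<exists>!e. e \<in> M \<and> v \<in> e"
    using pm unfolding perfect_matching_def W_def E'_def by auto
  have SM: "S \<subseteq> M" using fs unfolding forcing_set_def by auto
  have "E' \<subseteq> Pow W"
  proof
    fix e assume "e \<in> E'"
    then obtain p q where "e = {p,q}" "p \<in> P1" "q \<in> P2" using edge by blast
    then show "e \<in> Pow W" using P1W P2W by auto
  qed
  then have finE': "finite E'" using finW by (meson finite_Pow_iff finite_subset)
  have finS: "finite S" using SM Msub finE' by (meson finite_subset)
  define I where "I = (\<Union>e\<in>S. e \<inter> P2)"
  have finI: "finite I" unfolding I_def using finS P2W finW
    by (meson finite_Int finite_UN_I finite_subset)
  have "card I \<le> (\<Sum>e\<in>S. card (e \<inter> P2))" unfolding I_def using finS by (rule card_UN_le)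
  also have "\<dots> \<le> (\<Sum>e\<in>S. 1)"
  proof (rule sum_mono)
    fix e assume "e \<in> S"
    then obtain p q where "e = {p,q}" "p \<in> P1" "q \<in> P2" using edge SM Msub by blast
    then have "e \<inter> P2 = {q}" using P12 by auto
    then show "card (e \<inter> P2) \<le> 1" by simp
  qed
  finally have cI: "card I < card X" using lt by simp
  define l where "l = (\<lambda>(q::'a\<times>nat) x. if snd q = 1 then (if x = fst q then 1 else 0) else - C x (fst q))"
  obtain w where w: "\<exists>x\<in>X. w x \<noteq> 0" "\<forall>i\<in>I. (\<Sum>x\<in>X. l i x * w x) = 0"
    using homog_nontrivial[OF finI finX cI, of l] by blast
  define u where "u = (\<lambda>q. if q \<in> P2 then (\<Sum>x\<in>X. l q x * w x) else 0)"
  have u1: "u (x,1) = w x" if "x \<in> X" for x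
  proof -
    have "(\<Sum>x'\<in>X. l (x,1) x' * w x') = (\<Sum>x'\<in>X. if x' = x then w x' else 0)"
      by (rule sum.cong) (auto simp: l_def)
    also have "\<dots> = w x" using that finX by (simp add: sum.delta')
    finally show ?thesis using that by (simp add: u_def P2_def)
  qed
  have u1s: "u (x, Suc 0) = w x" if "x \<in> X" for x using u1[OF that] by simp
  have u0: "u (y,0) = - (\<Sum>x\<in>X. C x y * w x)" if "y \<in> Y" for y
    using that by (simp add: u_def P2_def l_def sum_negf)
  have row: "(\<Sum>q\<in>P2. A r q * u q) = 0" if "r \<in> P1" for r
  proof -
    have S2: "(\<Sum>q\<in>P2. A r q * u q) = (\<Sum>y\<in>Y. A r (y,0) * u (y,0)) + (\<Sum>x\<in>X. A r (x,1) * u (x,1))"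
      unfolding P2_def using finX finY by (rule sum_P2)
    from that consider (a) x0 where "x0 \<in> X" "r = (x0,0)" | (b) y0 where "y0 \<in> Y" "r = (y0,1)"
      unfolding P1_def by blast
    then show ?thesis
    proof cases
      case a
      have "(\<Sum>y\<in>Y. A r (y,0) * u (y,0)) = - (\<Sum>y\<in>Y. B x0 y * (\<Sum>x\<in>X. C x y * w x))"
        using a by (simp add: A_def u0 sum_negf)
      also have "(\<Sum>y\<in>Y. B x0 y * (\<Sum>x\<in>X. C x y * w x)) = (\<Sum>x\<in>X. (\<Sum>y\<in>Y. B x0 y * C x y) * w x)"
        by (simp add: sum_distrib_left sum_distrib_right mult.assoc sum.swap[of _ Y])
      also have "\<dots> = (\<Sum>x\<in>X. if x = x0 then w x else 0)"
        using BC a by (intro sum.cong) auto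
      also have "\<dots> = w x0" using a finX by (simp add: sum.delta')
      finally have 1: "(\<Sum>y\<in>Y. A r (y,0) * u (y,0)) = - w x0" .
      have "(\<Sum>x\<in>X. A r (x,1) * u (x,1)) = (\<Sum>x\<in>X. if x = x0 then w x else 0)"
        using a by (intro sum.cong) (auto simp: A_def u1 u1s)
      also have "\<dots> = w x0" using a finX by (simp add: sum.delta')
      finally show ?thesis using S2 1 by simp
    next
      case b
      have "(\<Sum>y\<in>Y. A r (y,0) * u (y,0)) = (\<Sum>y\<in>Y. if y = y0 then u (y,0) else 0)"
        using b by (intro sum.cong) (auto simp: A_def)
      also have "\<dots> = u (y0, 0)" using b finY by (simp add: sum.delta')
      finally have 1: "(\<Sum>y\<in>Y. A r (y,0) * u (y,0)) = - (\<Sum>x\<in>X. C x y0 * w x)" using u0 b by simp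
      have "(\<Sum>x\<in>X. A r (x,1) * u (x,1)) = (\<Sum>x\<in>X. C x y0 * w x)"
        using b by (intro sum.cong) (auto simp: A_def u1 u1s)
      then show ?thesis using S2 1 by simp
    qed
  qed
  define Z where "Z = {q \<in> P2. u q \<noteq> 0}"
  have ZP2: "Z \<subseteq> P2" unfolding Z_def by (rule Collect_restrict)
  have finP2: "finite P2" by (rule finite_subset[OF P2W finW])
  have finZ: "finite Z" by (rule finite_subset[OF ZP2 finP2])
  have Zne: "Z \<noteq> {}"
  proof -
    obtain x where "x \<in> X" "w x \<noteq> 0" using w by blast
    then have "(x,1) \<in> Z" using u1 by (auto simp: Z_def P2_def)
    then show ?thesis by blast
  qed
  have partner: "\<exists>r. {c, r} \<in> M \<and> r \<in> P1" if "c \<in> Z" for c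
  proof -
    have "c \<in> W" using that ZP2 P2W by blast
    then obtain e where e: "e \<in> M" "c \<in> e" using uniq by blast
    then obtain p q where pq: "e = {p,q}" "p \<in> P1" "q \<in> P2" using edge Msub by blast
    have "c = q" using pq e that ZP2 P12 by blast
    then show ?thesis using e pq by (metis insert_commute)
  qed
  obtain ptn where ptn: "\<forall>c\<in>Z. {c, ptn c} \<in> M \<and> ptn c \<in> P1"
    using partner by metis
  have next_: "\<exists>q\<in>Z. q \<noteq> c \<and> {ptn c, q} \<in> E'" if "c \<in> Z" for c
  proof -
    let ?r = "ptn c"
    have r: "?r \<in> P1" "{c, ?r} \<in> M" using ptn that by auto
    have cP2: "c \<in> P2" using that ZP2 by blast
    have "{?r, c} \<in> E'" using r Msub by (metis insert_commute subsetD)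
    then have Arc: "A ?r c \<noteq> 0" using Achar r cP2 by blast
    have uc: "u c \<noteq> 0" using that Z_def by blast

    have "(\<Sum>q\<in>P2. A ?r q * u q) = A ?r c * u c + (\<Sum>q\<in>P2 - {c}. A ?r q * u q)"
      using sum.remove[OF finP2 cP2] by simp
    then have "(\<Sum>q\<in>P2 - {c}. A ?r q * u q) \<noteq> 0" using row[OF r(1)] Arc uc by auto
    then obtain q where q: "q \<in> P2 - {c}" "A ?r q * u q \<noteq> 0" by (meson sum.neutral)
    then have "q \<in> Z" "{?r, q} \<in> E'" using Achar r by (auto simp: Z_def)
    then show ?thesis using q by blast
  qed
  obtain g where g: "\<forall>c\<in>Z. g c \<in> Z \<and> g c \<noteq> c \<and> {ptn c, g c} \<in> E'"
    using next_ by metis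
  have SZ: "\<forall>c\<in>Z. \<forall>e\<in>S. c \<notin> e"
  proof (intro ballI notI)
    fix c e assume "c \<in> Z" "e \<in> S" "c \<in> e"
    then have "c \<in> I" using ZP2 unfolding I_def by blast
    then have "u c = 0" using w ZP2 \<open>c \<in> Z\<close> by (auto simp: u_def)
    then show False using \<open>c \<in> Z\<close> Z_def by blast
  qed
  have ptn2: "\<forall>c\<in>Z. {c, ptn c} \<in> M \<and> ptn c \<notin> Z \<and> ptn c \<in> W"
    using ptn ZP2 P12 P1W by blast
  show False
    using alt_cycle[OF pm[folded W_def E'_def] fs[folded W_def E'_def] _ finZ Zne ptn2 SZ g]
      ZP2 P2W by blast
qed




lemma E'_sub:
  assumes "e \<in> cart_prod_E V E K2_V K2_E"
  shows "e \<subseteq> V \<times> {0,1}"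
proof -
  obtain a i b j where e: "e = {(a,i),(b,j)}" and m: "{(a,i),(b,j)} \<in> cart_prod_E V E K2_V K2_E"
    using E'_form[OF assms] by blast
  then show ?thesis unfolding memE' by auto
qed

lemma self_forcing:
  assumes "perfect_matching (V \<times> {0,1}) (cart_prod_E V E K2_V K2_E) M"
  shows "forcing_set (V \<times> {0,1}) (cart_prod_E V E K2_V K2_E) M M"
  unfolding forcing_set_def
proof (intro conjI allI impI subset_refl)
  fix M' assume a: "perfect_matching (V \<times> {0,1}) (cart_prod_E V E K2_V K2_E) M' \<and> M \<subseteq> M'"
  have u': "\<And>v. v \<in> V \<times> {0,1} \<Longrightarrow> \<exists>!e. e \<in> M' \<and> v \<in> e"
    using a unfolding perfect_matching_def by blast
  have M'E: "M' \<subseteq> cart_prod_E V E K2_V K2_E"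
    using a unfolding perfect_matching_def by blast
  have u: "\<And>v. v \<in> V \<times> {0,1} \<Longrightarrow> \<exists>!e. e \<in> M \<and> v \<in> e"
    using assms unfolding perfect_matching_def by blast
  show "M' = M"
  proof
    show "M \<subseteq> M'" using a by blast
    show "M' \<subseteq> M"
    proof
      fix e assume e: "e \<in> M'"
      then have eE: "e \<in> cart_prod_E V E K2_V K2_E" using M'E by blast
      obtain a i b j where ee: "e = {(a,i),(b,j)}" using E'_form[OF eE] by blast
      have p: "(a,i) \<in> V \<times> {0,1}" using E'_sub[OF eE] ee by blast
      obtain e0 where e0: "e0 \<in> M" "(a,i) \<in> e0" using u[OF p] by blast
      have "e0 \<in> M'" using e0 a by blast
      then have "e0 = e" using u'[OF p] e0 e ee by blast
      then show "e \<in> M" using e0 by simp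
    qed
  qed
qed

lemma forcing_number_ge:
  fixes V :: "'a set" and E X Y and B C :: "'a \<Rightarrow> 'a \<Rightarrow> 'f::field"
  assumes sg: "simple_graph V E" and bp: "bipartition V E X Y"
    and wB: "weighted_biadj E X Y B" and wC: "weighted_biadj E X Y C"
    and BC: "\<forall>x\<in>X. \<forall>x'\<in>X. (\<Sum>y\<in>Y. B x y * C x' y) = (if x = x' then 1 else 0)"
    and pm: "perfect_matching (cart_prod_V V K2_V) (cart_prod_E V E K2_V K2_E) M"
  shows "card X \<le> forcing_number (cart_prod_V V K2_V) (cart_prod_E V E K2_V K2_E) M"
proof -
  have W: "cart_prod_V V K2_V = V \<times> {0,1}" by (simp add: cart_prod_V_def K2_V_def)
  have "\<exists>S. forcing_set (cart_prod_V V K2_V) (cart_prod_E V E K2_V K2_E) M S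
          \<and> card S = forcing_number (cart_prod_V V K2_V) (cart_prod_E V E K2_V K2_E) M"
    unfolding forcing_number_def
    by (rule LeastI_ex) (use self_forcing pm W in auto)
  then obtain S where S: "forcing_set (cart_prod_V V K2_V) (cart_prod_E V E K2_V K2_E) M S"
     "card S = forcing_number (cart_prod_V V K2_V) (cart_prod_E V E K2_V K2_E) M" by blast
  show ?thesis using lower_bound[OF sg bp wB wC BC pm S(1)] S(2) by simp
qed




lemma M0_facts:
  fixes V :: "'a set"
  assumes bp: "bipartition V E X Y"
  defines "M0 \<equiv> {{(v,0::nat),(v,1)} | v. v \<in> V}" and "S0 \<equiv> {{(x,0::nat),(x,1)} | x. x \<in> X}"
  shows "perfect_matching (V \<times> {0,1}) (cart_prod_E V E K2_V K2_E) M0"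
    and "forcing_set (V \<times> {0,1}) (cart_prod_E V E K2_V K2_E) M0 S0"
proof -
  have XY: "X \<inter> Y = {}" "X \<union> Y = V" and bE: "\<forall>e\<in>E. \<exists>x y. x\<in>X \<and> y\<in>Y \<and> e={x,y}"
    using bp unfolding bipartition_def by auto
  show pm0: "perfect_matching (V \<times> {0,1}) (cart_prod_E V E K2_V K2_E) M0"
    unfolding perfect_matching_def
  proof (intro conjI ballI)
    show "M0 \<subseteq> cart_prod_E V E K2_V K2_E" unfolding M0_def by (auto simp: memE')
  next
    fix p assume p: "p \<in> V \<times> {0::nat,1}"
    then obtain a i where ai: "p = (a,i)" "a \<in> V" "i \<in> {0,1}" by blast
    show "\<exists>!e. e \<in> M0 \<and> p \<in> e"
    proof (rule ex1I[of _ "{(a,0),(a,1)}"])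
      show "{(a,0),(a,1)} \<in> M0 \<and> p \<in> {(a,0),(a,1)}" using ai unfolding M0_def by auto
    next
      fix e assume "e \<in> M0 \<and> p \<in> e"
      then show "e = {(a,0),(a,1)}" using ai unfolding M0_def by auto
    qed
  qed
  show "forcing_set (V \<times> {0,1}) (cart_prod_E V E K2_V K2_E) M0 S0"
    unfolding forcing_set_def
  proof (intro conjI allI impI)
    show "S0 \<subseteq> M0" unfolding S0_def M0_def using XY by blast
  next
    fix M' assume a: "perfect_matching (V \<times> {0,1}) (cart_prod_E V E K2_V K2_E) M' \<and> S0 \<subseteq> M'"
    have u': "\<And>v. v \<in> V \<times> {0,1} \<Longrightarrow> \<exists>!e. e \<in> M' \<and> v \<in> e"
      using a unfolding perfect_matching_def by blast
    have M'E: "M' \<subseteq> cart_prod_E V E K2_V K2_E"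
      using a unfolding perfect_matching_def by blast
    have sub: "M' \<subseteq> M0"
    proof
      fix e assume e: "e \<in> M'"
      then have eE: "e \<in> cart_prod_E V E K2_V K2_E" using M'E by blast
      obtain a i b j where ee: "e = {(a,i),(b,j)}" and m: "{(a,i),(b,j)} \<in> cart_prod_E V E K2_V K2_E"
        using E'_form[OF eE] by blast
      have c: "a \<in> V" "b \<in> V" "i \<in> {0,1}" "j \<in> {0,1}" "(a = b \<and> i \<noteq> j) \<or> (i = j \<and> {a,b} \<in> E)"
        using m unfolding memE' by auto
      show "e \<in> M0"
      proof (cases "a = b \<and> i \<noteq> j")
        case True
        then have "e = {(a,0),(a,1)}" using c ee by (auto simp: insert_commute)
        then show ?thesis using c unfolding M0_def by blast
      next
        case False
        then have ij: "i = j" "{a,b} \<in> E" using c by auto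
        then obtain x y where xy: "x \<in> X" "y \<in> Y" "{a,b} = {x,y}" using bE by blast
        have xe: "(x,i) \<in> e" using xy ee ij by (auto simp: doubleton_eq_iff)
        have xW: "(x,i) \<in> V \<times> {0,1}" using xy XY c by auto
        have s: "{(x,0),(x,1)} \<in> M'" using a xy unfolding S0_def by blast
        have "(x,i) \<in> {(x,0),(x,1)}" using c by auto
        then have "e = {(x,0),(x,1)}" using u'[OF xW] s e xe by blast
        then have "(x,0) \<in> e" "(x,1) \<in> e" by auto
        then have "0 = i" "1 = i" using ee ij by auto
        then show ?thesis by simp
      qed
    qed
    show "M' = M0"
    proof
      show "M' \<subseteq> M0" by (rule sub)
      show "M0 \<subseteq> M'"
      proof
        fix e0 assume "e0 \<in> M0"
        then obtain v where v: "v \<in> V" "e0 = {(v,0),(v,1)}" unfolding M0_def by blast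
        then have vW: "(v,0) \<in> V \<times> {0::nat,1}" by simp
        obtain e where e: "e \<in> M'" "(v,0) \<in> e" using u'[OF vW] by blast
        then have "e \<in> M0" using sub by blast
        then obtain v' where "e = {(v',0),(v',1)}" unfolding M0_def by blast
        then have "e = e0" using e v by auto
        then show "e0 \<in> M'" using e by simp
      qed
    qed
  qed
qed

theorem theorem3p1:
  fixes V :: "'a set" and E :: "'a set set" and X Y :: "'a set"
  assumes "simple_graph V E"
    and "bipartition V E X Y"
    and "card X \<le> card Y"
    and "R_F E X Y \<noteq> ({} :: ('a \<Rightarrow> 'a \<Rightarrow> 'f::field) set)"
  shows "min_forcing_number (cart_prod_V V K2_V) (cart_prod_E V E K2_V K2_E) = card X"
proof -
  obtain B :: "'a \<Rightarrow> 'a \<Rightarrow> 'f" where "B \<in> R_F E X Y" using assms(4) by blast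
  then obtain C :: "'a \<Rightarrow> 'a \<Rightarrow> 'f" where wB: "weighted_biadj E X Y B" and wC: "weighted_biadj E X Y C"
    and BC: "\<forall>x\<in>X. \<forall>x'\<in>X. (\<Sum>y\<in>Y. B x y * C x' y) = (if x = x' then 1 else 0)"
    unfolding R_F_def by blast
  have W: "cart_prod_V V K2_V = V \<times> {0,1}" by (simp add: cart_prod_V_def K2_V_def)
  have finV: "finite V" using assms(1) unfolding simple_graph_def by auto
  have XY: "X \<union> Y = V" using assms(2) unfolding bipartition_def by auto
  have finX: "finite X" using finV XY by (auto intro: finite_subset)
  define M0 where "M0 = {{(v,0::nat),(v,1)} | v. v \<in> V}"
  define S0 where "S0 = {{(x,0::nat),(x,1)} | x. x \<in> X}"
  have pm0: "perfect_matching (cart_prod_V V K2_V) (cart_prod_E V E K2_V K2_E) M0"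
    using M0_facts(1)[OF assms(2)] W M0_def by simp
  have fs0: "forcing_set (cart_prod_V V K2_V) (cart_prod_E V E K2_V K2_E) M0 S0"
    using M0_facts(2)[OF assms(2)] W M0_def S0_def by simp
  have cS0: "card S0 = card X"
  proof -
    have "S0 = (\<lambda>x. {(x,0::nat),(x,1)}) ` X" unfolding S0_def by blast
    moreover have "inj_on (\<lambda>x. {(x,0::nat),(x,1)}) X" by (auto simp: inj_on_def doubleton_eq_iff)
    ultimately show ?thesis by (simp add: card_image)
  qed
  have le0: "forcing_number (cart_prod_V V K2_V) (cart_prod_E V E K2_V K2_E) M0 \<le> card X"
    unfolding forcing_number_def using fs0 cS0 by (intro Least_le) blast
  have ge: "card X \<le> forcing_number (cart_prod_V V K2_V) (cart_prod_E V E K2_V K2_E) M"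
    if "perfect_matching (cart_prod_V V K2_V) (cart_prod_E V E K2_V K2_E) M" for M
    using forcing_number_ge[OF assms(1,2) wB wC BC that] .
  let ?F = "{forcing_number (cart_prod_V V K2_V) (cart_prod_E V E K2_V K2_E) M | M.
              perfect_matching (cart_prod_V V K2_V) (cart_prod_E V E K2_V K2_E) M}"
  have finE': "finite (cart_prod_E V E K2_V K2_E)"
  proof -
    have "cart_prod_E V E K2_V K2_E \<subseteq> Pow (V \<times> {0,1})" using E'_sub by blast
    then show ?thesis using finV by (meson finite_Pow_iff finite_SigmaI finite.emptyI finite.insertI finite_subset)
  qed
  have "?F \<subseteq> (\<lambda>M. forcing_number (cart_prod_V V K2_V) (cart_prod_E V E K2_V K2_E) M) ` Pow (cart_prod_E V E K2_V K2_E)"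
    unfolding perfect_matching_def by blast
  then have finF: "finite ?F" using finE' by (meson finite_Pow_iff finite_imageI finite_subset)
  have "card X \<in> ?F" using pm0 le0 ge[OF pm0] by (metis (mono_tags, lifting) le_antisym mem_Collect_eq)
  then have "Min ?F = card X" using finF ge by (intro Min_eqI) auto
  then show ?thesis unfolding min_forcing_number_def .
qed


end
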